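(* Let $\mathcal{S}\subseteq\mathcal{P}_{fin}(\mathbb{N})$ be an IP set, let $\mathcal{B}\subseteq\mathcal{S}$ be finite, let $r\geq 1$, and let $c:NU(\mathcal{S})\rightarrow[1,r]$ be a coloring. Then at least one of the following holds: (1) there is a finite $\mathcal{D}\subseteq\mathcal{S}-\mathcal{B}$ such that for every $S\in(\mathcal{S}-\mathcal{B})-\mathcal{D}$ there is a $D\in NU(\mathcal{D})$ such that $\mathcal{B}$ does not half-match $D\cup S$; or (2) there is an IP set $\mathcal{T}\subseteq\mathcal{S}-\mathcal{B}$ such that $\mathcal{B}$ half-matches $\mathcal{T}$.
   Context: $\mathcal{P}_{fin}(\mathbb{N})$ is the set of finite subsets of $\mathbb{N}$. For $\mathcal{S}\subseteq\mathcal{P}_{fin}(\mathbb{N})$, $NU(\mathcal{S})$ denotes the set of non-empty sets which are unions of finitely many elements of $\mathcal{S}$. A set $\mathcal{S}\subseteq\mathcal{P}_{fin}(\mathbb{N})$ is an IP set if it is closed under finite unions and contains an infinite family of pairwise disjoint elements. For $B\in\mathcal{S}$, $\mathcal{S}-B:=\{T\in\mathcal{S}: T\cap B=\emptyset\}$, and for $\mathcal{B}\subseteq\mathcal{S}$, $\mathcal{S}-\mathcal{B}:=\bigcap_{B\in\mathcal{B}}(\mathcal{S}-B)$. Relative to a coloring $c$: a family $\mathcal{D}$ half-matches a set $B$ if there is $D\in\mathcal{D}$ with $c(B)=c(D\cup B)$; $\mathcal{D}$ half-matches a family $\mathcal{B}$ if it half-matches every $B\in\mathcal{B}$. *)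

theory Defs
  imports Main
begin

definition Pfin :: "nat set set" where
  "Pfin = {A. finite A}"

definition NU :: "nat set set \<Rightarrow> nat set set" where
  "NU F = {A. A \<noteq> {} \<and> (\<exists>G. finite G \<and> G \<subseteq> F \<and> A = \<Union>G)}"

definition IP_set :: "nat set set \<Rightarrow> bool" where
  "IP_set S \<longleftrightarrow> S \<subseteq> Pfin
     \<and> (\<forall>G. finite G \<and> G \<noteq> {} \<and> G \<subseteq> S \<longrightarrow> \<Union>G \<in> S)
     \<and> (\<exists>F. F \<subseteq> S \<and> infinite F \<and> pairwise disjnt F)"

definition minus_set :: "nat set set \<Rightarrow> nat set \<Rightarrow> nat set set" where
  "minus_set S B = {T \<in> S. T \<inter> B = {}}"

text \<open>S - \<B> for a family: intersection of S - B over B in \<B> (equal to S if \<B> is empty)\<close>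
definition minus_fam :: "nat set set \<Rightarrow> nat set set \<Rightarrow> nat set set" where
  "minus_fam S \<B> = {T \<in> S. \<forall>B\<in>\<B>. T \<in> minus_set S B}"

definition half_matches_set :: "(nat set \<Rightarrow> nat) \<Rightarrow> nat set set \<Rightarrow> nat set \<Rightarrow> bool" where
  "half_matches_set c \<D> B \<longleftrightarrow> (\<exists>D\<in>\<D>. c B = c (D \<union> B))"

definition half_matches :: "(nat set \<Rightarrow> nat) \<Rightarrow> nat set set \<Rightarrow> nat set set \<Rightarrow> bool" where
  "half_matches c \<D> \<B> \<longleftrightarrow> (\<forall>B\<in>\<B>. half_matches_set c \<D> B)"

end

theory Submission
  imports Defs
begin

lemma mem_minus_fam: "T \<in> minus_fam X D \<longleftrightarrow> T \<in> X \<and> (\<forall>B\<in>D. T \<inter> B = {})"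
  unfolding minus_fam_def minus_set_def by auto

lemma minus_fam_sub: "T \<in> minus_fam X D \<Longrightarrow> T \<in> X"
  unfolding minus_fam_def by simp

lemma minus_fam_disj: "T \<in> minus_fam X D \<Longrightarrow> B \<in> D \<Longrightarrow> T \<inter> B = {}"
  unfolding minus_fam_def minus_set_def by simp

lemma NU_closed:
  assumes "finite G" "G \<noteq> {}" "G \<subseteq> NU F"
  shows "\<Union>G \<in> NU F"
proof -
  have "\<forall>A\<in>G. \<exists>H. finite H \<and> H \<subseteq> F \<and> A = \<Union>H" using assms(3) unfolding NU_def by blast
  then obtain h where h: "\<And>A. A \<in> G \<Longrightarrow> finite (h A) \<and> h A \<subseteq> F \<and> A = \<Union>(h A)" by metis
  have ne: "\<And>A. A \<in> G \<Longrightarrow> A \<noteq> {}" using assms(3) unfolding NU_def by blast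
  have "\<Union>G = (\<Union>A\<in>G. A)" by simp
  also have "\<dots> = (\<Union>A\<in>G. \<Union>(h A))" using h by (intro SUP_cong) auto
  also have "\<dots> = \<Union>(\<Union>(h ` G))" by blast
  finally have "\<Union>G = \<Union>(\<Union>(h ` G))" .
  moreover have "finite (\<Union>(h ` G))" using h assms(1) by auto
  moreover have "\<Union>(h ` G) \<subseteq> F" using h by auto
  moreover have "\<Union>G \<noteq> {}" using assms(2) ne by auto
  ultimately show ?thesis unfolding NU_def by blast
qed

lemma NU_single: "y \<noteq> {} \<Longrightarrow> y \<in> F \<Longrightarrow> y \<in> NU F"
  unfolding NU_def by (rule CollectI, rule conjI, simp, rule exI[of _ "{y}"], auto)

lemma NU_insert_Un: "D \<in> NU F \<Longrightarrow> D \<union> y \<in> NU (insert y F)"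
proof -
  assume "D \<in> NU F"
  then obtain G where G: "finite G" "G \<subseteq> F" "D = \<Union>G" "D \<noteq> {}" unfolding NU_def by blast
  then have "D \<union> y = \<Union>(insert y G)" by auto
  then show ?thesis using G unfolding NU_def by blast
qed

lemma NU_seq_elem:
  fixes x :: "nat \<Rightarrow> nat set"
  assumes "A \<in> NU (range x)"
  shows "\<exists>m. A = x m \<or> (\<exists>D\<in>NU (x ` {..<m}). A = D \<union> x m)"
proof -
  obtain G where G: "finite G" "G \<subseteq> range x" "A = \<Union>G" "A \<noteq> {}"
    using assms unfolding NU_def by blast
  obtain I where I: "finite I" "G = x ` I" using finite_subset_image[OF G(1) G(2)] by blast
  have "I \<noteq> {}" using G I by auto
  define m where "m = Max I"
  have mI: "m \<in> I" using I `I \<noteq> {}` m_def by simp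
  have lt: "\<And>i. i \<in> I - {m} \<Longrightarrow> i < m" using I m_def by (simp add: order.not_eq_order_implies_strict)
  define D where "D = \<Union>(x ` (I - {m}))"
  have A: "A = D \<union> x m" using G I mI D_def by auto
  show ?thesis
  proof (cases "D = {}")
    case True then show ?thesis using A by auto
  next
    case False
    have "D \<in> NU (x ` {..<m})" unfolding NU_def D_def using False lt I(1) D_def
      by (intro CollectI conjI exI[of _ "x ` (I - {m})"]) auto
    then show ?thesis using A by blast
  qed
qed

lemma avoid:
  assumes "IP_set S" "finite K"
  shows "\<exists>y\<in>S. y \<noteq> {} \<and> y \<inter> K = {}"
proof -
  obtain F where F: "F \<subseteq> S" "infinite F" "pairwise disjnt F" using assms(1) unfolding IP_set_def by blast
  let ?E = "{A\<in>F. A \<inter> K \<noteq> {}}"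
  define g where "g A = (SOME k. k \<in> A \<inter> K)" for A
  have g: "A \<in> ?E \<Longrightarrow> g A \<in> A \<inter> K" for A unfolding g_def by (rule someI_ex) auto
  have "inj_on g ?E"
  proof (rule inj_onI)
    fix A B assume "A \<in> ?E" "B \<in> ?E" "g A = g B"
    then have "g A \<in> A \<inter> B" using g[of A] g[of B] by auto
    then have "\<not> disjnt A B" unfolding disjnt_def by blast
    then show "A = B" using F(3) \<open>A \<in> ?E\<close> \<open>B \<in> ?E\<close> unfolding pairwise_def by blast
  qed
  moreover have "g ` ?E \<subseteq> K" using g by blast
  ultimately have "finite ?E" using assms(2) inj_on_finite by blast
  then have "infinite (F - ?E - {{}})" using F(2) by auto
  then obtain y where "y \<in> F - ?E - {{}}" by (metis finite.emptyI ex_in_conv)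
  then show ?thesis using F(1) by blast
qed

theorem lemma2p1:
  fixes S \<B> :: "nat set set" and r :: nat and c :: "nat set \<Rightarrow> nat"
  assumes "IP_set S"
    and "\<B> \<subseteq> S" and "finite \<B>"
    and "r \<ge> 1"
    and "\<forall>A\<in>NU S. c A \<in> {1..r}"
  shows "(\<exists>\<D>. finite \<D> \<and> \<D> \<subseteq> minus_fam S \<B> \<and>
            (\<forall>S'\<in>minus_fam (minus_fam S \<B>) \<D>.
               \<exists>D\<in>NU \<D>. \<not> half_matches_set c \<B> (D \<union> S')))
       \<or> (\<exists>\<T>. IP_set \<T> \<and> \<T> \<subseteq> minus_fam S \<B> \<and> half_matches c \<B> \<T>)"
proof (rule disjCI)
  let ?M = "minus_fam S \<B>"
  let ?hm = "half_matches_set c \<B>"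
  assume nc: "\<not> (\<exists>\<T>. IP_set \<T> \<and> \<T> \<subseteq> ?M \<and> half_matches c \<B> \<T>)"
  show "\<exists>\<D>. finite \<D> \<and> \<D> \<subseteq> ?M \<and>
            (\<forall>S'\<in>minus_fam ?M \<D>. \<exists>D\<in>NU \<D>. \<not> ?hm (D \<union> S'))"
  proof (rule ccontr)
    assume n1: "\<not> (\<exists>\<D>. finite \<D> \<and> \<D> \<subseteq> ?M \<and>
            (\<forall>S'\<in>minus_fam ?M \<D>. \<exists>D\<in>NU \<D>. \<not> ?hm (D \<union> S')))"
    note ipd = assms(1)[unfolded IP_set_def]
    have SP: "S \<subseteq> Pfin" using conjunct1[OF ipd] .
    have Sun0: "\<forall>G. finite G \<and> G \<noteq> {} \<and> G \<subseteq> S \<longrightarrow> \<Union>G \<in> S" using conjunct1[OF conjunct2[OF ipd]] .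
    have Sun: "\<And>G. finite G \<Longrightarrow> G \<noteq> {} \<Longrightarrow> G \<subseteq> S \<Longrightarrow> \<Union>G \<in> S"
      using Sun0 by blast
    have MS: "?M \<subseteq> S" unfolding minus_fam_def by blast
    have fail: "\<exists>S'\<in>minus_fam ?M \<D>. \<forall>D\<in>NU \<D>. ?hm (D \<union> S')"
      if "finite \<D>" "\<D> \<subseteq> ?M" for \<D>
    proof (rule ccontr)
      assume "\<not> (\<exists>S'\<in>minus_fam ?M \<D>. \<forall>D\<in>NU \<D>. ?hm (D \<union> S'))"
      then have h: "\<forall>S'\<in>minus_fam ?M \<D>. \<exists>D\<in>NU \<D>. \<not> ?hm (D \<union> S')" by blast
      show False by (rule notE[OF n1], intro exI[of _ \<D>] conjI, fact that(1), fact that(2), fact h)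
    qed
    define Q where "Q \<D> x \<longleftrightarrow> x \<in> minus_fam ?M \<D> \<and> x \<noteq> {} \<and> ?hm x \<and> (\<forall>D\<in>NU \<D>. ?hm (D \<union> x))"
      for \<D> x
    have step: "\<exists>x. Q \<D> x" if D: "finite \<D>" "\<D> \<subseteq> ?M" for \<D>
    proof -
      let ?K = "\<Union>\<B> \<union> \<Union>\<D>"
      have "\<D> \<subseteq> Pfin" using D(2) MS SP by (meson subset_trans)
      then have f1: "finite (\<Union>\<D>)" using D(1) unfolding Pfin_def by (intro finite_Union) auto
      have "\<B> \<subseteq> Pfin" using assms(2) SP by (meson subset_trans)
      then have f2: "finite (\<Union>\<B>)" using assms(3) unfolding Pfin_def by (intro finite_Union) auto
      have "finite ?K" using f1 f2 by simp
      obtain y where y1: "y \<in> S" and y2: "y \<noteq> {} \<and> y \<inter> ?K = {}"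
        using avoid[OF assms(1) \<open>finite ?K\<close>] by (rule bexE)
      have y: "y \<in> S" "y \<noteq> {}" "y \<inter> ?K = {}" using y1 y2 by simp_all
      have yM: "y \<in> ?M" using y unfolding mem_minus_fam by auto
      have yD: "y \<in> minus_fam ?M \<D>" using y yM unfolding mem_minus_fam by auto
      have "finite (insert y \<D>)" "insert y \<D> \<subseteq> ?M" using D yM by auto
      then have "\<exists>S'\<in>minus_fam ?M (insert y \<D>). \<forall>D\<in>NU (insert y \<D>). ?hm (D \<union> S')"
        by (rule fail)
      then obtain S'' where S''a: "S'' \<in> minus_fam ?M (insert y \<D>)"
        and S''b: "\<forall>D\<in>NU (insert y \<D>). ?hm (D \<union> S'')" by (rule bexE)
      have S''M: "S'' \<in> ?M" and S''d: "\<forall>B\<in>insert y \<D>. S'' \<inter> B = {}"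
        using S''a unfolding mem_minus_fam by simp_all
      have "S'' \<in> S" using MS S''M by (rule subsetD)
      have "\<Union>{y, S''} \<in> S" by (rule Sun) (simp_all add: y1 \<open>S'' \<in> S\<close>)
      then have yS: "y \<union> S'' \<in> S" by simp
      have "y \<union> S'' \<in> ?M" using yS yM S''M unfolding mem_minus_fam by auto
      then have c1: "y \<union> S'' \<in> minus_fam ?M \<D>" using yD S''d unfolding mem_minus_fam by auto
      have "y \<in> NU (insert y \<D>)" using NU_single[OF y(2), of "insert y \<D>"] by simp
      then have c2: "?hm (y \<union> S'')" by (rule S''b[rule_format])
      have c3: "?hm (D \<union> (y \<union> S''))" if "D \<in> NU \<D>" for D
      proof -
        have "?hm ((D \<union> y) \<union> S'')" using NU_insert_Un[OF that, of y] by (rule S''b[rule_format])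
        then show ?thesis by (simp add: Un_assoc)
      qed
      show ?thesis unfolding Q_def using c1 c2 c3 y(2)
        by (intro exI[of _ "y \<union> S''"] conjI) auto
    qed
    define f where "f \<D> = (SOME x. Q \<D> x)" for \<D>
    define L where "L = rec_nat [] (\<lambda>n l. l @ [f (set l)])"
    define x where "x n = f (set (L n))" for n
    have Lsuc: "L (Suc n) = L n @ [x n]" for n unfolding L_def x_def by simp
    have setL: "set (L n) = x ` {..<n}" for n
    proof (induction n)
      case 0 show ?case unfolding L_def by simp
    next
      case (Suc n) then show ?case by (simp add: Lsuc lessThan_Suc)
    qed
    have QD: "z \<in> minus_fam ?M \<D> \<and> z \<noteq> {} \<and> ?hm z \<and> (\<forall>D\<in>NU \<D>. ?hm (D \<union> z))"
      if "Q \<D> z" for \<D> z using that unfolding Q_def .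
    have key: "Q (x ` {..<n}) (x n)" for n
    proof (induction n rule: less_induct)
      case (less n)
      have sub: "x ` {..<n} \<subseteq> ?M"
      proof
        fix z assume "z \<in> x ` {..<n}"
        then obtain m where m: "m < n" "z = x m" by auto
        have "x m \<in> minus_fam ?M (x ` {..<m})" using QD[OF less[OF m(1)]] by (rule conjunct1)
        then show "z \<in> ?M" unfolding m(2) by (rule minus_fam_sub)
      qed
      have ex: "\<exists>z. Q (x ` {..<n}) z" by (rule step[OF _ sub]) simp
      have "Q (x ` {..<n}) (f (x ` {..<n}))" unfolding f_def by (rule someI_ex[OF ex])
      moreover have "x n = f (x ` {..<n})" using x_def[of n] setL[of n] by simp
      ultimately show ?case by simp
    qed
    have xMD: "x n \<in> minus_fam ?M (x ` {..<n})" for n using QD[OF key[of n]] by (rule conjunct1)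
    have xM: "x n \<in> ?M" for n using xMD[of n] by (rule minus_fam_sub)
    have xne: "x n \<noteq> {}" for n using QD[OF key[of n]] by simp
    have xhm: "?hm (x n)" for n using QD[OF key[of n]] by simp
    have xD: "\<And>D. D \<in> NU (x ` {..<n}) \<Longrightarrow> ?hm (D \<union> x n)" for n using QD[OF key[of n]] by simp
    have xdisj: "x j \<inter> x i = {}" if "i < j" for i j
    proof -
      have "x i \<in> x ` {..<j}" using that by simp
      with xMD[of j] show ?thesis by (rule minus_fam_disj)
    qed
    have xdisj2: "i \<noteq> j \<Longrightarrow> x i \<inter> x j = {}" for i j
      using xdisj[of i j] xdisj[of j i] by (cases "i < j") auto
    have injx: "inj x"
    proof (rule injI)
      fix i j assume "x i = x j"
      then show "i = j" using xdisj2[of i j] xne[of i] by auto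
    qed
    define T where "T = NU (range x)"
    have TM: "T \<subseteq> ?M"
    proof
      fix A assume "A \<in> T"
      then obtain G where G: "finite G" "G \<subseteq> range x" "A = \<Union>G" "A \<noteq> {}"
        unfolding T_def NU_def by blast
      have Gne: "G \<noteq> {}" using G(3,4) by auto
      have GM: "G \<subseteq> ?M" using G(2) xM by auto
      have "G \<subseteq> S" using GM MS by (rule subset_trans)
      then have AS: "A \<in> S" unfolding G(3) using Sun G(1) Gne by simp
      have "\<forall>B\<in>\<B>. A \<inter> B = {}"
      proof
        fix B assume "B \<in> \<B>"
        have "g \<inter> B = {}" if "g \<in> G" for g
        proof -
          have "g \<in> ?M" using GM that by (rule subsetD)
          then show ?thesis using \<open>B \<in> \<B>\<close> by (rule minus_fam_disj)
        qed
        then show "A \<inter> B = {}" unfolding G(3) by blast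
      qed
      then show "A \<in> ?M" using AS unfolding mem_minus_fam by simp
    qed
    have "IP_set T"
      unfolding IP_set_def
    proof (intro conjI allI impI)
      show "T \<subseteq> Pfin" using TM MS SP by (meson subset_trans)
    next
      fix G assume G: "finite G \<and> G \<noteq> {} \<and> G \<subseteq> T"
      then show "\<Union>G \<in> T" unfolding T_def using NU_closed[of G "range x"] by simp
    next
      have "range x \<subseteq> T" unfolding T_def using NU_single xne by auto
      moreover have "infinite (range x)" using injx finite_imageD infinite_UNIV_nat by auto
      moreover have "pairwise disjnt (range x)"
      proof (rule pairwiseI)
        fix a b assume "a \<in> range x" "b \<in> range x" "a \<noteq> b"
        then obtain i j where "a = x i" "b = x j" "i \<noteq> j" by auto
        then show "disjnt a b" unfolding disjnt_def using xdisj2 by simp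
      qed
      ultimately show "\<exists>F. F \<subseteq> T \<and> infinite F \<and> pairwise disjnt F" by blast
    qed
    moreover have "half_matches c \<B> T"
      unfolding half_matches_def
    proof
      fix A assume "A \<in> T"
      then obtain m where "A = x m \<or> (\<exists>D\<in>NU (x ` {..<m}). A = D \<union> x m)"
        using NU_seq_elem unfolding T_def by blast
      then show "?hm A"
      proof
        assume "A = x m" then show ?thesis using xhm by simp
      next
        assume "\<exists>D\<in>NU (x ` {..<m}). A = D \<union> x m"
        then obtain D where "D \<in> NU (x ` {..<m})" "A = D \<union> x m" by blast
        then show ?thesis using xD by simp
      qed
    qed
    ultimately have "\<exists>\<T>. IP_set \<T> \<and> \<T> \<subseteq> ?M \<and> half_matches c \<B> \<T>" using TM by blast
    then show False using nc by (rule notE[rotated])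
  qed
qed

end
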